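(* Let $0<\lambda<1$ and $0 < c < \frac{2}{1-\lambda}$. If the improper integral $$\int_1^\infty \frac{W(t) - \exp(c t^{1-\lambda})}{t^\lambda \exp(c t^{1-\lambda})}\,dt$$ converges, then $W(x) \sim \exp(c x^{1-\lambda})$.
   Context: Fix $0<\lambda<1$ and $c>0$. For $x>0$ define $w(x) = \frac{c(1-\lambda)\log(x)\exp(c x^{1-\lambda})}{x^\lambda}$ and $W(x) = \sum_{p \le x} w(p)$, the sum over primes $p\le x$. $f\sim g$ means $f(x)/g(x)\to1$ as $x\to\infty$. *)

theory Defs
  imports "HOL-Analysis.Analysis" "HOL-Computational_Algebra.Primes"
begin

definition wt :: "real \<Rightarrow> real \<Rightarrow> real \<Rightarrow> real" where
  "wt lam c x = c * (1 - lam) * ln x * exp (c * x powr (1 - lam)) / x powr lam"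

definition Wt :: "real \<Rightarrow> real \<Rightarrow> real \<Rightarrow> real" where
  "Wt lam c x = (\<Sum>p\<in>{p::nat. prime p \<and> real p \<le> x}. wt lam c (real p))"

definition improper_integral_converges :: "(real \<Rightarrow> real) \<Rightarrow> real \<Rightarrow> bool" where
  "improper_integral_converges f a \<longleftrightarrow>
     (\<forall>T\<ge>a. f integrable_on {a..T}) \<and>
     (\<exists>L. ((\<lambda>T. integral {a..T} f) \<longlongrightarrow> L) at_top)"

end

theory Submission
  imports Defs
begin

lemma int_powr_neg:
  fixes lam a b :: real
  assumes "0 < lam" "lam < 1" "0 < a" "a \<le> b"
  shows "((\<lambda>t. t powr (-lam)) has_integral (b powr (1-lam) - a powr (1-lam))/(1-lam)) {a..b}"
proof -
  have "((\<lambda>t. t powr (-lam)) has_integral (b powr (1-lam)/(1-lam) - a powr (1-lam)/(1-lam))) {a..b}"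
  proof (rule fundamental_theorem_of_calculus[OF assms(4)])
    fix x assume x: "x \<in> {a..b}"
    then have "x > 0" using assms by auto
    have "((\<lambda>t. t powr (1-lam) / (1-lam)) has_real_derivative ((1-lam) * x powr ((1-lam) - 1)) / (1-lam)) (at x)"
      by (intro DERIV_cdivide has_real_derivative_powr \<open>x>0\<close>)
    moreover have "((1-lam) * x powr ((1-lam) - 1)) / (1-lam) = x powr (-lam)"
      using assms by simp
    ultimately show "((\<lambda>t. t powr (1-lam) / (1-lam)) has_vector_derivative x powr (-lam)) (at x within {a..b})"
      by (metis has_real_derivative_iff_has_vector_derivative has_field_derivative_at_within)
  qed
  then show ?thesis by (simp add: diff_divide_distrib)
qed

lemma powr_inv1: "0 \<le> (s::real) \<Longrightarrow> lam < 1 \<Longrightarrow> (s powr (1/(1-lam))) powr (1-lam) = s"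
  by (simp add: powr_powr)

lemma powr_inv2: "0 \<le> (s::real) \<Longrightarrow> lam < 1 \<Longrightarrow> (s powr (1-lam)) powr (1/(1-lam)) = s"
  by (simp add: powr_powr)

lemma finite_primes_le: "finite {p::nat. prime p \<and> real p \<le> x}"
proof (rule finite_subset)
  show "{p::nat. prime p \<and> real p \<le> x} \<subseteq> {..nat \<lceil>x\<rceil>}"
  proof
    fix p assume "p \<in> {p::nat. prime p \<and> real p \<le> x}"
    then have "real p \<le> x" by auto
    then have "real p \<le> real_of_int \<lceil>x\<rceil>" by (meson le_of_int_ceiling order_trans)
    then have "int p \<le> \<lceil>x\<rceil>" by linarith
    then show "p \<in> {..nat \<lceil>x\<rceil>}" by auto
  qed
qed auto

lemma Wt_mono:
  assumes "s \<le> t" "0 < c" "lam < 1"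
  shows "Wt lam c s \<le> Wt lam c t"
  unfolding Wt_def
proof (rule sum_mono2[OF finite_primes_le])
  show "{p::nat. prime p \<and> real p \<le> s} \<subseteq> {p. prime p \<and> real p \<le> t}" using assms by auto
  fix p assume "p \<in> {p::nat. prime p \<and> real p \<le> t} - {p. prime p \<and> real p \<le> s}"
  then have "prime p" by auto
  then have "p \<ge> 2" by (simp add: prime_ge_2_nat)
  then have "ln (real p) \<ge> 0" by simp
  moreover have "c * (1 - lam) \<ge> 0" using assms by simp
  ultimately show "0 \<le> wt lam c (real p)" unfolding wt_def by simp
qed


theorem mainTheorem8:
  fixes lam c :: real
  assumes "0 < lam" "lam < 1" "0 < c" "c < 2 / (1 - lam)"
    and "improper_integral_converges
           (\<lambda>t. (Wt lam c t - exp (c * t powr (1 - lam))) / (t powr lam * exp (c * t powr (1 - lam)))) 1"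
  shows "(\<lambda>x. Wt lam c x) \<sim>[at_top] (\<lambda>x. exp (c * x powr (1 - lam)))"
proof -
  define E where "E t = exp (c * t powr (1-lam))" for t
  define W where "W t = Wt lam c t" for t
  define g where "g t = (W t - E t) / (t powr lam * E t)" for t
  have Epos: "E t > 0" for t unfolding E_def by simp
  have Wmono: "s \<le> t \<Longrightarrow> W s \<le> W t" for s t unfolding W_def using Wt_mono assms by auto
  have Emono: "0 \<le> s \<Longrightarrow> s \<le> t \<Longrightarrow> E s \<le> E t" for s t
    unfolding E_def using assms by (auto intro!: mult_left_mono powr_mono2)
  from assms(5) have int: "\<And>T. T \<ge> 1 \<Longrightarrow> g integrable_on {1..T}"
    and "\<exists>L. ((\<lambda>T. integral {1..T} g) \<longlongrightarrow> L) at_top"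
    unfolding improper_integral_converges_def g_def E_def W_def by auto
  then obtain L where L: "((\<lambda>T. integral {1..T} g) \<longlongrightarrow> L) at_top" by blast
  have intsub: "g integrable_on {x..y}" if "1 \<le> x" "x \<le> y" for x y
    by (rule integrable_subinterval_real[OF int[of y]]) (use that in auto)
  have cauchy: "\<exists>N\<ge>1. \<forall>x y. N \<le> x \<longrightarrow> x \<le> y \<longrightarrow> \<bar>integral {x..y} g\<bar> < e" if "e > 0" for e
  proof -
    have "eventually (\<lambda>T. dist (integral {1..T} g) L < e/2) at_top"
      by (rule tendstoD[OF L]) (use that in simp)
    then obtain N where N: "\<And>T. T \<ge> N \<Longrightarrow> dist (integral {1..T} g) L < e/2"
      by (auto simp: eventually_at_top_linorder)
    show ?thesis
    proof (intro exI[of _ "max N 1"] conjI allI impI)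
      fix x y assume xy: "max N 1 \<le> x" "x \<le> y"
      have "integral {1..x} g + integral {x..y} g = integral {1..y} g"
        by (rule Henstock_Kurzweil_Integration.integral_combine) (use xy int[of y] in auto)
      moreover have "dist (integral {1..x} g) L < e/2" "dist (integral {1..y} g) L < e/2"
        using N xy by auto
      ultimately show "\<bar>integral {x..y} g\<bar> < e" unfolding dist_real_def abs_less_iff by linarith
    qed simp
  qed
  have lowint: "integral {x..y} g \<ge> \<eta> * ((y powr (1-lam) - x powr (1-lam))/(1-lam))"
    if "1 \<le> x" "x \<le> y" "\<And>t. t \<in> {x..y} \<Longrightarrow> g t \<ge> \<eta> * t powr (-lam)" for x y \<eta>
  proof -
    have h: "((\<lambda>t. \<eta> * t powr (-lam)) has_integral \<eta> * ((y powr (1-lam) - x powr (1-lam))/(1-lam))) {x..y}"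
      by (rule has_integral_mult_right, rule int_powr_neg) (use that assms in auto)
    have "integral {x..y} (\<lambda>t. \<eta> * t powr (-lam)) \<le> integral {x..y} g"
      by (rule integral_le) (use h intsub[OF that(1,2)] that(3) in auto)
    then show ?thesis using integral_unique[OF h] by linarith
  qed
  have upint: "integral {x..y} g \<le> \<eta> * ((y powr (1-lam) - x powr (1-lam))/(1-lam))"
    if "1 \<le> x" "x \<le> y" "\<And>t. t \<in> {x..y} \<Longrightarrow> g t \<le> \<eta> * t powr (-lam)" for x y \<eta>
  proof -
    have h: "((\<lambda>t. \<eta> * t powr (-lam)) has_integral \<eta> * ((y powr (1-lam) - x powr (1-lam))/(1-lam))) {x..y}"
      by (rule has_integral_mult_right, rule int_powr_neg) (use that assms in auto)
    have "integral {x..y} g \<le> integral {x..y} (\<lambda>t. \<eta> * t powr (-lam))"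
      by (rule integral_le) (use h intsub[OF that(1,2)] that(3) in auto)
    then show ?thesis using integral_unique[OF h] by linarith
  qed
  have gdiv: "g t = ((W t - E t) / E t) * t powr (-lam)" if "t > 0" for t
    unfolding g_def using that Epos[of t] by (simp add: powr_minus divide_simps)

  have upper: "eventually (\<lambda>x. W x / E x < 1 + \<epsilon>) at_top" if eps: "\<epsilon> > 0" for \<epsilon>
  proof -
    define d where "d = ln ((1+\<epsilon>)/(1+\<epsilon>/2)) / c"
    have q: "(1+\<epsilon>)/(1+\<epsilon>/2) > 1" using eps by (simp add: field_simps)
    have dpos: "d > 0" unfolding d_def using q assms by simp
    have expd: "exp (c*d) = (1+\<epsilon>)/(1+\<epsilon>/2)" unfolding d_def using q assms by simp
    define e' where "e' = (\<epsilon>/2) * (d/(1-lam))"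
    have "e' > 0" unfolding e'_def using eps dpos assms by simp
    from cauchy[OF this] obtain N where N: "N \<ge> 1" "\<And>x y. N \<le> x \<Longrightarrow> x \<le> y \<Longrightarrow> \<bar>integral {x..y} g\<bar> < e'"
      by blast
    show ?thesis unfolding eventually_at_top_linorder
    proof (intro exI[of _ N] allI impI)
      fix x assume xN: "x \<ge> N"
      show "W x / E x < 1 + \<epsilon>"
      proof (rule ccontr)
        assume "\<not> W x / E x < 1 + \<epsilon>"
        then have Wx: "W x \<ge> (1+\<epsilon>) * E x" using Epos[of x] by (simp add: field_simps)
        define y where "y = (x powr (1-lam) + d) powr (1/(1-lam))"
        have x0: "x \<ge> 1" using xN N by simp
        have ypow: "y powr (1-lam) = x powr (1-lam) + d"
          unfolding y_def using dpos assms by (intro powr_inv1) auto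
        have "x = (x powr (1-lam)) powr (1/(1-lam))" using x0 assms by (simp add: powr_inv2)
        also have "\<dots> \<le> y" unfolding y_def using dpos assms by (intro powr_mono2) auto
        finally have xy: "x \<le> y" .
        have Ey: "E y = E x * exp (c*d)" unfolding E_def ypow by (simp add: distrib_left exp_add)
        have "g t \<ge> (\<epsilon>/2) * t powr (-lam)" if t: "t \<in> {x..y}" for t
        proof -
          have tpos: "t > 0" using t x0 by auto
          have "E t \<le> E y" using Emono[of t y] t x0 by auto
          have "W t \<ge> (1+\<epsilon>) * E x" using Wmono[of x t] t Wx by auto
          also have "(1+\<epsilon>) * E x = (1+\<epsilon>/2) * E y" unfolding Ey expd using eps by (simp add: field_simps)
          also have "\<dots> \<ge> (1+\<epsilon>/2) * E t" using \<open>E t \<le> E y\<close> eps by simp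
          finally have "(W t - E t) / E t \<ge> \<epsilon>/2" using Epos[of t] by (simp add: field_simps)
          then show ?thesis unfolding gdiv[OF tpos] by (intro mult_right_mono) auto
        qed
        then have "integral {x..y} g \<ge> (\<epsilon>/2) * ((y powr (1-lam) - x powr (1-lam))/(1-lam))"
          by (intro lowint x0 xy) auto
        then have "integral {x..y} g \<ge> e'" unfolding e'_def ypow by simp
        with N(2)[OF xN xy] show False by simp
      qed
    qed
  qed

  have lower: "eventually (\<lambda>x. W x / E x > 1 - \<epsilon>) at_top" if eps: "\<epsilon> > 0" "\<epsilon> < 1" for \<epsilon>
  proof -
    define d where "d = ln ((1-\<epsilon>/2)/(1-\<epsilon>)) / c"
    have q: "(1-\<epsilon>/2)/(1-\<epsilon>) > 1" using eps by (simp add: field_simps)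
    have dpos: "d > 0" unfolding d_def using q assms by simp
    have expd: "exp (c*d) = (1-\<epsilon>/2)/(1-\<epsilon>)" unfolding d_def using q assms by simp
    define e' where "e' = (\<epsilon>/2) * (d/(1-lam))"
    have "e' > 0" unfolding e'_def using eps dpos assms by simp
    from cauchy[OF this] obtain N where N: "N \<ge> 1" "\<And>x y. N \<le> x \<Longrightarrow> x \<le> y \<Longrightarrow> \<bar>integral {x..y} g\<bar> < e'"
      by blast
    define M where "M = (N powr (1-lam) + d) powr (1/(1-lam))"
    show ?thesis unfolding eventually_at_top_linorder
    proof (intro exI[of _ M] allI impI)
      fix x assume xM: "x \<ge> M"
      have Mpow: "M powr (1-lam) = N powr (1-lam) + d"
        unfolding M_def using dpos assms by (intro powr_inv1) auto
      have M0: "M \<ge> 0" unfolding M_def by simp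
      have xpow: "x powr (1-lam) \<ge> N powr (1-lam) + d"
        using powr_mono2[of "1-lam" M x] xM M0 assms Mpow by auto
      have xd: "0 \<le> x powr (1-lam) - d" using xpow powr_ge_zero[of N "1-lam"] by linarith
      define y where "y = (x powr (1-lam) - d) powr (1/(1-lam))"
      have ypow: "y powr (1-lam) = x powr (1-lam) - d"
      proof -
        have "0 \<le> N powr (1-lam)" by simp
        then have "0 \<le> x powr (1-lam) - d" using xpow by linarith
        then show ?thesis unfolding y_def using assms by (intro powr_inv1) auto
      qed
      have "N = (N powr (1-lam)) powr (1/(1-lam))" using N assms by (simp add: powr_inv2)
      also have "\<dots> \<le> y" unfolding y_def using xpow xd assms by (intro powr_mono2) auto
      finally have yN: "N \<le> y" .
      have "y \<le> (x powr (1-lam)) powr (1/(1-lam))" unfolding y_def using xd dpos assms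
        by (intro powr_mono2) auto
      also have "\<dots> = x" using xM M0 assms by (simp add: powr_inv2)
      finally have yx: "y \<le> x" .
      have y1: "y \<ge> 1" using yN N by simp
      have Ex: "E x = E y * exp (c*d)" unfolding E_def
      proof -
        have "x powr (1-lam) = y powr (1-lam) + d" using ypow by linarith
        then have "c * x powr (1-lam) = c * (y powr (1-lam) + d)" by (rule arg_cong)
        then have "c * x powr (1-lam) = c * y powr (1-lam) + c*d" by (simp only: distrib_left)
        then show "exp (c * x powr (1 - lam)) = exp (c * y powr (1 - lam)) * exp (c * d)"
          by (simp add: exp_add)
      qed
      show "W x / E x > 1 - \<epsilon>"
      proof (rule ccontr)
        assume "\<not> W x / E x > 1 - \<epsilon>"
        then have Wx: "W x \<le> (1-\<epsilon>) * E x" using Epos[of x] by (simp add: field_simps)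
        have "g t \<le> (-(\<epsilon>/2)) * t powr (-lam)" if t: "t \<in> {y..x}" for t
        proof -
          have tpos: "t > 0" using t y1 by auto
          have "E y \<le> E t" using Emono[of y t] t y1 by auto
          have "W t \<le> (1-\<epsilon>) * E x" using Wmono[of t x] t Wx by auto
          also have "(1-\<epsilon>) * E x = (1-\<epsilon>/2) * E y" unfolding Ex expd using eps by (simp add: field_simps)
          also have "\<dots> \<le> (1-\<epsilon>/2) * E t" using \<open>E y \<le> E t\<close> eps by simp
          finally have "(W t - E t) / E t \<le> -(\<epsilon>/2)" using Epos[of t] by (simp add: field_simps)
          then show ?thesis unfolding gdiv[OF tpos] by (intro mult_right_mono) auto
        qed
        then have "integral {y..x} g \<le> (-(\<epsilon>/2)) * ((x powr (1-lam) - y powr (1-lam))/(1-lam))"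
          by (intro upint y1 yx) auto
        then have "integral {y..x} g \<le> - e'" unfolding e'_def ypow by simp
        with N(2)[OF yN yx] show False by simp
      qed
    qed
  qed

  have "((\<lambda>x. W x / E x) \<longlongrightarrow> 1) at_top"
  proof (rule tendstoI)
    fix e :: real assume e: "e > 0"
    define \<epsilon> where "\<epsilon> = min e (1/2)"
    have "\<epsilon> > 0" "\<epsilon> < 1" "\<epsilon> \<le> e" using e unfolding \<epsilon>_def by auto
    from upper[OF \<open>\<epsilon> > 0\<close>] lower[OF \<open>\<epsilon> > 0\<close> \<open>\<epsilon> < 1\<close>]
    show "eventually (\<lambda>x. dist (W x / E x) 1 < e) at_top"
    proof eventually_elim
      case (elim x) then show ?case using \<open>\<epsilon> \<le> e\<close> by (simp add: dist_real_def abs_less_iff)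
    qed
  qed
  then show ?thesis unfolding W_def E_def by (rule asymp_equivI')
qed

end
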